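(* Let $\beta=(b_1,\ldots,b_m)$ be a composition of $d$. Then \[ \sum_{w\in\mathcal{L}(S_\beta,\nu)}q^{\mathrm{maj}(w)}=\sum_{D\in\mathcal{E}_d(r_1,\ldots,r_{m-1})}q^{\mathrm{maj}(D)-2(r_1+\cdots+r_{m-1})}, \] where for $m=1$ the sum $r_1+\cdots+r_{m-1}$ is $0$.
   Context: Put $r_0=0$, $r_i=b_1+\cdots+b_i$. The poset $S_\beta$ is $\bigcup_{l=1}^m\{(i,j)\in\mathbb{N}^2: l\le i\le l+1,\ r_{l-1}+1\le j\le r_l\}$ with $(i_1,j_1)\le(i_2,j_2)$ iff $i_1\le i_2$ and $j_1\le j_2$, with natural labeling $\nu(i,j)=r_{l-1}+j+(i-l)b_l$ where $r_{l-1}+1\le j\le r_l$. A linear extension is an order-preserving bijection $\sigma:S_\beta\to\{1,\ldots,2d\}$, identified with the permutation $w=\nu(\sigma^{-1}(1))\cdots\nu(\sigma^{-1}(2d))$; $\mathcal{L}(S_\beta,\nu)$ is the set of these permutations, and $\mathrm{maj}(w)=\sum\{k: w_k>w_{k+1}\}$. A Dyck path from $(0,0)$ to $(2d,0)$ is a lattice path with steps $(1,1),(1,-1)$ never going below the $x$-axis; a valley is an interior point preceded by a $(1,-1)$ step and followed by a $(1,1)$ step, a return is a valley on the $x$-axis, and $\mathrm{maj}(D)$ is the sum of the $x$-coordinates of all valleys of $D$. $\mathcal{E}_d(x_1,\ldots,x_{r})$ is the set of Dyck paths from $(0,0)$ to $(2d,0)$ having returns at $(2x_1,0),\ldots,(2x_r,0)$,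 these being exactly the marked returns (for $r=0$: Dyck paths with no marked returns). *)

theory Defs
  imports Main
begin

definition composition :: "nat list \<Rightarrow> nat \<Rightarrow> bool" where
  "composition \<beta> d \<longleftrightarrow> \<beta> \<noteq> [] \<and> (\<forall>b\<in>set \<beta>. 0 < b) \<and> sum_list \<beta> = d"

definition rr :: "nat list \<Rightarrow> nat \<Rightarrow> nat" where
  "rr \<beta> i = sum_list (take i \<beta>)"

definition S_beta :: "nat list \<Rightarrow> (nat \<times> nat) set" where
  "S_beta \<beta> = (\<Union>l\<in>{1..length \<beta>}.
      {(i, j). l \<le> i \<and> i \<le> l + 1 \<and> rr \<beta> (l - 1) + 1 \<le> j \<and> j \<le> rr \<beta> l})"

definition pt_le :: "nat \<times> nat \<Rightarrow> nat \<times> nat \<Rightarrow> bool" where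
  "pt_le x y \<longleftrightarrow> fst x \<le> fst y \<and> snd x \<le> snd y"

definition blk :: "nat list \<Rightarrow> nat \<Rightarrow> nat" where
  "blk \<beta> j = (THE l. 1 \<le> l \<and> l \<le> length \<beta> \<and> rr \<beta> (l - 1) + 1 \<le> j \<and> j \<le> rr \<beta> l)"

definition nu :: "nat list \<Rightarrow> nat \<times> nat \<Rightarrow> nat" where
  "nu \<beta> p = (let l = blk \<beta> (snd p) in
      rr \<beta> (l - 1) + snd p + (fst p - l) * \<beta> ! (l - 1))"

definition lin_ext :: "nat list \<Rightarrow> nat list set" where
  "lin_ext \<beta> = {map (\<lambda>k. nu \<beta> (inv_into (S_beta \<beta>) \<sigma> k)) [1..<2 * sum_list \<beta> + 1] | \<sigma>.
      bij_betw \<sigma> (S_beta \<beta>) {1..2 * sum_list \<beta>} \<and>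
      (\<forall>x\<in>S_beta \<beta>. \<forall>y\<in>S_beta \<beta>. pt_le x y \<longrightarrow> \<sigma> x \<le> \<sigma> y)}"

definition maj_word :: "nat list \<Rightarrow> nat" where
  "maj_word w = \<Sum>{k. 1 \<le> k \<and> k < length w \<and> w ! (k - 1) > w ! k}"

text \<open>Dyck paths as lists of steps: True = (1,1), False = (1,-1).\<close>

definition height :: "bool list \<Rightarrow> nat \<Rightarrow> int" where
  "height D k = int (length (filter id (take k D))) - int (length (filter Not (take k D)))"

definition dyck :: "nat \<Rightarrow> bool list \<Rightarrow> bool" where
  "dyck d D \<longleftrightarrow> length D = 2 * d \<and> (\<forall>k\<le>length D. 0 \<le> height D k) \<and> height D (length D) = 0"

definition valley :: "bool list \<Rightarrow> nat \<Rightarrow> bool" where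
  "valley D k \<longleftrightarrow> 0 < k \<and> k < length D \<and> \<not> D ! (k - 1) \<and> D ! k"

definition is_return :: "bool list \<Rightarrow> nat \<Rightarrow> bool" where
  "is_return D k \<longleftrightarrow> valley D k \<and> height D k = 0"

definition maj_dyck :: "bool list \<Rightarrow> nat" where
  "maj_dyck D = \<Sum>{k. valley D k}"

definition E_set :: "nat \<Rightarrow> nat list \<Rightarrow> bool list set" where
  "E_set d xs = {D. dyck d D \<and> (\<forall>x\<in>set xs. is_return D (2 * x))}"

end

theory Submission
  imports Defs
begin


lemma rr_0[simp]: "rr \<beta> 0 = 0" by (simp add: rr_def)

lemma rr_mono: "l \<le> l' \<Longrightarrow> rr \<beta> l \<le> rr (\<beta>::nat list) l'"
proof -
  assume "l \<le> l'"
  then have "take l' \<beta> = take l \<beta> @ take (l' - l) (drop l \<beta>)"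
    by (metis le_add_diff_inverse take_add)
  then show ?thesis by (simp add: rr_def)
qed

lemma rr_Suc: "l < length \<beta> \<Longrightarrow> rr \<beta> (Suc l) = rr \<beta> l + \<beta> ! l"
  by (simp add: rr_def take_Suc_conv_app_nth)

locale cmp =
  fixes \<beta> :: "nat list" and d :: nat
  assumes comp: "composition \<beta> d"
begin

lemma pos: "i < length \<beta> \<Longrightarrow> 0 < \<beta> ! i"
  using comp by (auto simp: composition_def)

lemma rr_len: "rr \<beta> (length \<beta>) = d"
  using comp by (simp add: composition_def rr_def)

lemma len_pos: "0 < length \<beta>" using comp by (simp add: composition_def)

lemma rr_strict: "l < l' \<Longrightarrow> l' \<le> length \<beta> \<Longrightarrow> rr \<beta> l < rr \<beta> l'"
proof -
  assume a: "l < l'" "l' \<le> length \<beta>"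
  then obtain k where k: "l' = Suc k" by (cases l') auto
  have "rr \<beta> l \<le> rr \<beta> k" using a k by (intro rr_mono) simp
  also have "\<dots> < rr \<beta> (Suc k)" using rr_Suc[of k \<beta>] pos[of k] a k by simp
  finally show ?thesis using k by simp
qed

lemma rr_le_d: "rr \<beta> l \<le> d"
proof (cases "l \<le> length \<beta>")
  case True then show ?thesis using rr_mono[OF True, of \<beta>] rr_len by simp
next
  case False then show ?thesis using rr_len by (simp add: rr_def)
qed

lemma blk_unique: "1 \<le> l \<Longrightarrow> l \<le> length \<beta> \<Longrightarrow> rr \<beta> (l - 1) < c \<Longrightarrow> c \<le> rr \<beta> l \<Longrightarrow> blk \<beta> c = l"
  unfolding blk_def
proof (rule the_equality)
  assume a: "1 \<le> l" "l \<le> length \<beta>" "rr \<beta> (l - 1) < c" "c \<le> rr \<beta> l"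
  then show "1 \<le> l \<and> l \<le> length \<beta> \<and> rr \<beta> (l - 1) + 1 \<le> c \<and> c \<le> rr \<beta> l" by simp
  fix l' assume b: "1 \<le> l' \<and> l' \<le> length \<beta> \<and> rr \<beta> (l' - 1) + 1 \<le> c \<and> c \<le> rr \<beta> l'"
  show "l' = l"
  proof (rule ccontr)
    assume "l' \<noteq> l"
    then consider "l' < l" | "l < l'" by linarith
    then show False
    proof cases
      case 1 then have "rr \<beta> l' \<le> rr \<beta> (l - 1)" by (intro rr_mono) simp
      then show False using a b by simp
    next
      case 2 then have "rr \<beta> l \<le> rr \<beta> (l' - 1)" by (intro rr_mono) simp
      then show False using a b by simp
    qed
  qed
qed

lemma blk_ex: assumes "1 \<le> c" "c \<le> d"
  shows "1 \<le> blk \<beta> c \<and> blk \<beta> c \<le> length \<beta> \<and> rr \<beta> (blk \<beta> c - 1) < c \<and> c \<le> rr \<beta> (blk \<beta> c)"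
proof -
  define l where "l = (LEAST l. c \<le> rr \<beta> l)"
  have ex: "c \<le> rr \<beta> (length \<beta>)" using rr_len assms by simp
  have c1: "c \<le> rr \<beta> l" unfolding l_def by (rule LeastI[of _ "length \<beta>"]) (rule ex)
  have c2: "l \<le> length \<beta>" unfolding l_def by (rule Least_le) (rule ex)
  have c3: "l \<noteq> 0" using c1 assms by (intro notI) simp
  have c4: "\<not> c \<le> rr \<beta> (l - 1)" unfolding l_def
    by (rule not_less_Least) (use c3 in \<open>simp add: l_def\<close>)
  have "blk \<beta> c = l" using c1 c2 c3 c4 by (intro blk_unique) auto
  then show ?thesis using c1 c2 c3 c4 by simp
qed

lemma blk_ge: "1 \<le> c \<Longrightarrow> c \<le> d \<Longrightarrow> 1 \<le> blk \<beta> c" using blk_ex by blast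
lemma blk_le: "1 \<le> c \<Longrightarrow> c \<le> d \<Longrightarrow> blk \<beta> c \<le> length \<beta>" using blk_ex by blast
lemma blk_lo: "1 \<le> c \<Longrightarrow> c \<le> d \<Longrightarrow> rr \<beta> (blk \<beta> c - 1) < c" using blk_ex by blast
lemma blk_hi: "1 \<le> c \<Longrightarrow> c \<le> d \<Longrightarrow> c \<le> rr \<beta> (blk \<beta> c)" using blk_ex by blast

lemma blk_le_iff: "1 \<le> c \<Longrightarrow> c \<le> d \<Longrightarrow> blk \<beta> c \<le> l \<longleftrightarrow> c \<le> rr \<beta> l"
proof
  assume a: "1 \<le> c" "c \<le> d"
  { assume "blk \<beta> c \<le> l" then show "c \<le> rr \<beta> l"
      using rr_mono[of "blk \<beta> c" l \<beta>] blk_hi[OF a] by simp }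
  { assume b: "c \<le> rr \<beta> l" show "blk \<beta> c \<le> l"
    proof (rule ccontr)
      assume "\<not> blk \<beta> c \<le> l"
      then have "rr \<beta> l \<le> rr \<beta> (blk \<beta> c - 1)" by (intro rr_mono) simp
      then show False using b blk_lo[OF a] by simp
    qed }
qed

lemma blk_mono: "1 \<le> c \<Longrightarrow> c' \<le> d \<Longrightarrow> c \<le> c' \<Longrightarrow> blk \<beta> c \<le> blk \<beta> c'"
  using blk_le_iff[of c "blk \<beta> c'"] blk_hi[of c'] by simp

lemma blk_lt: "1 \<le> c \<Longrightarrow> c \<le> d \<Longrightarrow> 1 \<le> c' \<Longrightarrow> c' \<le> d \<Longrightarrow> blk \<beta> c < blk \<beta> c' \<Longrightarrow> c < c'"
  using blk_mono[of c' c] by (cases "c' \<le> c") auto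

end


definition topp :: "nat list \<Rightarrow> nat \<Rightarrow> nat \<times> nat" where "topp \<beta> c = (blk \<beta> c, c)"
definition botp :: "nat list \<Rightarrow> nat \<Rightarrow> nat \<times> nat" where "botp \<beta> c = (Suc (blk \<beta> c), c)"
definition isT :: "nat list \<Rightarrow> nat \<times> nat \<Rightarrow> bool" where "isT \<beta> p \<longleftrightarrow> fst p = blk \<beta> (snd p)"

lemma topp_simps[simp]: "fst (topp \<beta> c) = blk \<beta> c" "snd (topp \<beta> c) = c" "isT \<beta> (topp \<beta> c)"
  by (auto simp: topp_def isT_def)
lemma botp_simps[simp]: "fst (botp \<beta> c) = Suc (blk \<beta> c)" "snd (botp \<beta> c) = c" "\<not> isT \<beta> (botp \<beta> c)"
  by (auto simp: botp_def isT_def)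
lemma topp_inj[simp]: "topp \<beta> c = topp \<beta> c' \<longleftrightarrow> c = c'" by (auto simp: topp_def)
lemma botp_inj[simp]: "botp \<beta> c = botp \<beta> c' \<longleftrightarrow> c = c'" by (auto simp: botp_def)
lemma topp_botp[simp]: "topp \<beta> c \<noteq> botp \<beta> c'" "botp \<beta> c' \<noteq> topp \<beta> c" by (auto simp: topp_def botp_def)

context cmp begin

lemma S_char: "S_beta \<beta> = {p. 1 \<le> snd p \<and> snd p \<le> d \<and> (fst p = blk \<beta> (snd p) \<or> fst p = Suc (blk \<beta> (snd p)))}"
proof (intro set_eqI iffI)
  fix p assume "p \<in> S_beta \<beta>"
  then obtain l i j where p: "p = (i,j)" "1 \<le> l" "l \<le> length \<beta>" "l \<le> i" "i \<le> l + 1"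
    "rr \<beta> (l - 1) + 1 \<le> j" "j \<le> rr \<beta> l" unfolding S_beta_def by auto
  have j: "1 \<le> j" "j \<le> d" using p rr_le_d[of l] by auto
  have "blk \<beta> j = l" using p by (intro blk_unique) auto
  then show "p \<in> {p. 1 \<le> snd p \<and> snd p \<le> d \<and> (fst p = blk \<beta> (snd p) \<or> fst p = Suc (blk \<beta> (snd p)))}"
    using p j by auto
next
  fix p assume "p \<in> {p. 1 \<le> snd p \<and> snd p \<le> d \<and> (fst p = blk \<beta> (snd p) \<or> fst p = Suc (blk \<beta> (snd p)))}"
  then obtain i j where p: "p = (i,j)" "1 \<le> j" "j \<le> d" "i = blk \<beta> j \<or> i = Suc (blk \<beta> j)" by (cases p) auto
  note b = blk_ex[OF p(2,3)]
  show "p \<in> S_beta \<beta>" unfolding S_beta_def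
    by (rule UN_I[of "blk \<beta> j"]) (use p b in auto)
qed

lemma S_cases: "p \<in> S_beta \<beta> \<Longrightarrow> 1 \<le> snd p \<and> snd p \<le> d \<and> (p = topp \<beta> (snd p) \<or> p = botp \<beta> (snd p))"
  unfolding S_char by (cases p) (auto simp: topp_def botp_def)

lemma S_isT: "p \<in> S_beta \<beta> \<Longrightarrow> isT \<beta> p \<Longrightarrow> p = topp \<beta> (snd p)"
  using S_cases[of p] by (metis botp_simps(3))
lemma S_notT: "p \<in> S_beta \<beta> \<Longrightarrow> \<not> isT \<beta> p \<Longrightarrow> p = botp \<beta> (snd p)"
  using S_cases[of p] by (metis topp_simps(3))

lemma topp_S: "1 \<le> c \<Longrightarrow> c \<le> d \<Longrightarrow> topp \<beta> c \<in> S_beta \<beta>"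
  unfolding S_char by simp
lemma botp_S: "1 \<le> c \<Longrightarrow> c \<le> d \<Longrightarrow> botp \<beta> c \<in> S_beta \<beta>"
  unfolding S_char by simp

lemma S_le_eq: "t \<le> d \<Longrightarrow> {y \<in> S_beta \<beta>. snd y \<le> t} = topp \<beta> ` {1..t} \<union> botp \<beta> ` {1..t}"
proof (intro set_eqI iffI)
  fix y assume t: "t \<le> d" and "y \<in> {y \<in> S_beta \<beta>. snd y \<le> t}"
  then show "y \<in> topp \<beta> ` {1..t} \<union> botp \<beta> ` {1..t}" using S_cases[of y] by (metis (no_types, lifting) Un_iff atLeastAtMost_iff imageI mem_Collect_eq)
next
  fix y assume t: "t \<le> d" and "y \<in> topp \<beta> ` {1..t} \<union> botp \<beta> ` {1..t}"
  then show "y \<in> {y \<in> S_beta \<beta>. snd y \<le> t}" using topp_S botp_S by auto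
qed

lemma card_S_le: "t \<le> d \<Longrightarrow> card {y \<in> S_beta \<beta>. snd y \<le> t} = 2 * t"
proof -
  assume t: "t \<le> d"
  have "card (topp \<beta> ` {1..t} \<union> botp \<beta> ` {1..t}) = card (topp \<beta> ` {1..t}) + card (botp \<beta> ` {1..t})"
    by (rule card_Un_disjoint) auto
  also have "\<dots> = 2 * t" by (simp add: card_image inj_on_def)
  finally show ?thesis using S_le_eq[OF t] by simp
qed

lemma card_S: "card (S_beta \<beta>) = 2 * d"
proof -
  have "{y \<in> S_beta \<beta>. snd y \<le> d} = S_beta \<beta>" using S_cases by auto
  then show ?thesis using card_S_le[of d] by simp
qed

lemma d_pos: "0 < d" using rr_strict[of 0 "length \<beta>"] len_pos rr_len by simp


lemma nu_top: "1 \<le> c \<Longrightarrow> c \<le> d \<Longrightarrow> nu \<beta> (topp \<beta> c) = rr \<beta> (blk \<beta> c - 1) + c"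
  by (simp add: nu_def Let_def)

lemma nu_bot: "1 \<le> c \<Longrightarrow> c \<le> d \<Longrightarrow> nu \<beta> (botp \<beta> c) = rr \<beta> (blk \<beta> c) + c"
proof -
  assume a: "1 \<le> c" "c \<le> d"
  have "rr \<beta> (blk \<beta> c) = rr \<beta> (Suc (blk \<beta> c - 1))" using blk_ge[OF a] by simp
  also have "\<dots> = rr \<beta> (blk \<beta> c - 1) + \<beta> ! (blk \<beta> c - 1)"
    using blk_le[OF a] blk_ge[OF a] by (intro rr_Suc) simp
  finally show ?thesis by (simp add: nu_def Let_def Suc_diff_le)
qed

end

context cmp begin

lemma nu_cmp:
  assumes p: "p \<in> S_beta \<beta>" and p': "p' \<in> S_beta \<beta>" and ne: "p \<noteq> p'" and nl: "\<not> pt_le p' p"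
  shows "nu \<beta> p \<noteq> nu \<beta> p' \<and> (nu \<beta> p' < nu \<beta> p \<longleftrightarrow> \<not> isT \<beta> p \<and> isT \<beta> p' \<and> blk \<beta> (snd p) = blk \<beta> (snd p'))"
proof -
  define c where "c = snd p"
  define c' where "c' = snd p'"
  define l where "l = blk \<beta> c"
  define l' where "l' = blk \<beta> c'"
  have cb: "1 \<le> c" "c \<le> d" "1 \<le> c'" "c' \<le> d" using S_cases[OF p] S_cases[OF p'] c_def c'_def by auto
  have b1: "rr \<beta> (l - 1) < c" "c \<le> rr \<beta> l" "1 \<le> l" "l \<le> length \<beta>" using blk_ex[OF cb(1,2)] l_def by auto
  have b2: "rr \<beta> (l' - 1) < c'" "c' \<le> rr \<beta> l'" "1 \<le> l'" "l' \<le> length \<beta>" using blk_ex[OF cb(3,4)] l'_def by auto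
  have m1: "rr \<beta> (l - 1) \<le> rr \<beta> l" "rr \<beta> (l' - 1) \<le> rr \<beta> l'" by (simp_all add: rr_mono)
  have H1: "l < l' \<Longrightarrow> rr \<beta> l \<le> rr \<beta> (l' - 1)" by (intro rr_mono) simp
  have H2: "l' < l \<Longrightarrow> rr \<beta> l' \<le> rr \<beta> (l - 1)" by (intro rr_mono) simp
  have H3: "l' < l \<Longrightarrow> c' < c" using blk_lt[OF cb(3,4,1,2)] l_def l'_def by simp
  have H4: "l < l' \<Longrightarrow> c < c'" using blk_lt[OF cb(1,2,3,4)] l_def l'_def by simp
  have H5: "c \<le> c' \<Longrightarrow> l \<le> l'" using blk_mono[OF cb(1,4)] l_def l'_def by simp
  have H6: "c' \<le> c \<Longrightarrow> l' \<le> l" using blk_mono[OF cb(3,2)] l_def l'_def by simp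
  have cp: "p = topp \<beta> c \<or> p = botp \<beta> c" using S_cases[OF p] c_def by auto
  have cp': "p' = topp \<beta> c' \<or> p' = botp \<beta> c'" using S_cases[OF p'] c'_def by auto
  have ptl: "pt_le x y \<longleftrightarrow> fst x \<le> fst y \<and> snd x \<le> snd y" for x y by (simp add: pt_le_def)
  show ?thesis
  proof (cases "p = topp \<beta> c")
    case a: True
    show ?thesis
    proof (cases "p' = topp \<beta> c'")
      case b: True
      have "c < c'" using nl ne a b H6 by (cases "c' \<le> c") (auto simp: ptl l_def l'_def)
      then show ?thesis using a b nu_top[OF cb(1,2)] nu_top[OF cb(3,4)] b1 b2 m1 H1 H5 l_def[symmetric] l'_def[symmetric]
        by (cases "l < l'") (auto simp: c_def[symmetric] c'_def[symmetric])
    next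
      case False
      then have b: "p' = botp \<beta> c'" using cp' by simp
      have "l \<le> l'" using nl ne a b H3 by (cases "l' < l") (auto simp: ptl l_def l'_def)
      then show ?thesis using a b nu_top[OF cb(1,2)] nu_bot[OF cb(3,4)] b1 b2 m1 H1 l_def[symmetric] l'_def[symmetric]
        by (cases "l < l'") (auto simp: c_def[symmetric] c'_def[symmetric])
    qed
  next
    case False
    then have a: "p = botp \<beta> c" using cp by simp
    show ?thesis
    proof (cases "p' = topp \<beta> c'")
      case b: True
      have "l \<le> l'" using nl ne a b H3 by (cases "l' < l") (auto simp: ptl l_def l'_def)
      then show ?thesis using a b nu_bot[OF cb(1,2)] nu_top[OF cb(3,4)] b1 b2 m1 H1 l_def[symmetric] l'_def[symmetric]
        by (cases "l < l'") (auto simp: c_def[symmetric] c'_def[symmetric])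
    next
      case False
      then have b: "p' = botp \<beta> c'" using cp' by simp
      have "c < c'" using nl ne a b H6 by (cases "c' \<le> c") (auto simp: ptl l_def l'_def)
      then show ?thesis using a b nu_bot[OF cb(1,2)] nu_bot[OF cb(3,4)] b1 b2 m1 H1 H5 l_def[symmetric] l'_def[symmetric]
        by (cases "l < l'") (auto simp: c_def[symmetric] c'_def[symmetric])
    qed
  qed
qed

lemma nu_inj: "inj_on (nu \<beta>) (S_beta \<beta>)"
proof (rule inj_onI, rule ccontr)
  fix p p' assume a: "p \<in> S_beta \<beta>" "p' \<in> S_beta \<beta>" "nu \<beta> p = nu \<beta> p'" "p \<noteq> p'"
  show False
  proof (cases "pt_le p' p")
    case False then show ?thesis using nu_cmp[OF a(1,2,4)] a(3) by simp
  next
    case True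
    then have "\<not> pt_le p p'" using a(4) by (cases p, cases p') (auto simp: pt_le_def)
    then show ?thesis using nu_cmp[OF a(2,1)] a(3,4) by simp
  qed
qed

end


definition goodl :: "nat list \<Rightarrow> (nat \<times> nat) list \<Rightarrow> bool" where
  "goodl \<beta> ps \<longleftrightarrow> distinct ps \<and> set ps = S_beta \<beta> \<and>
     (\<forall>i j. i < j \<longrightarrow> j < length ps \<longrightarrow> \<not> pt_le (ps ! j) (ps ! i))"

context cmp begin

lemma good_len: "goodl \<beta> ps \<Longrightarrow> length ps = 2 * d"
  using distinct_card[of ps] card_S by (simp add: goodl_def)

lemma good_idx_le: "goodl \<beta> ps \<Longrightarrow> i < length ps \<Longrightarrow> j < length ps \<Longrightarrow> pt_le (ps ! i) (ps ! j) \<Longrightarrow> i \<le> j"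
  unfolding goodl_def by (meson not_le_imp_less)

lemma good_mem: "goodl \<beta> ps \<Longrightarrow> i < length ps \<Longrightarrow> ps ! i \<in> S_beta \<beta>"
  unfolding goodl_def by auto

lemma good_ex: "goodl \<beta> ps \<Longrightarrow> x \<in> S_beta \<beta> \<Longrightarrow> \<exists>i < length ps. ps ! i = x"
  unfolding goodl_def by (metis in_set_conv_nth)

lemma good_eq: "goodl \<beta> ps \<Longrightarrow> i < length ps \<Longrightarrow> j < length ps \<Longrightarrow> ps ! i = ps ! j \<Longrightarrow> i = j"
  unfolding goodl_def by (simp add: nth_eq_iff_index_eq)

lemma chain_count:
  assumes good: "goodl \<beta> ps" and k: "k < length ps"
    and Qg: "\<And>p. p \<in> S_beta \<beta> \<Longrightarrow> Q p \<Longrightarrow> p = g (snd p)"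
    and gS: "\<And>c. 1 \<le> c \<Longrightarrow> c \<le> d \<Longrightarrow> g c \<in> S_beta \<beta> \<and> Q (g c) \<and> snd (g c) = c"
    and gle: "\<And>c c'. 1 \<le> c \<Longrightarrow> c \<le> c' \<Longrightarrow> c' \<le> d \<Longrightarrow> pt_le (g c) (g c')"
    and Qk: "Q (ps ! k)"
  shows "card {i. i < k \<and> Q (ps ! i)} = snd (ps ! k) - 1"
proof -
  define c where "c = snd (ps ! k)"
  have pk: "ps ! k \<in> S_beta \<beta>" using good_mem[OF good k] .
  have cb: "1 \<le> c" "c \<le> d" using S_cases[OF pk] c_def by auto
  have gk: "ps ! k = g c" using Qg[OF pk Qk] c_def by simp
  have "bij_betw (\<lambda>i. snd (ps ! i)) {i. i < k \<and> Q (ps ! i)} {1..<c}"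
  proof (rule bij_betw_imageI)
    show "inj_on (\<lambda>i. snd (ps ! i)) {i. i < k \<and> Q (ps ! i)}"
    proof (rule inj_onI)
      fix i i' assume a: "i \<in> {i. i < k \<and> Q (ps ! i)}" "i' \<in> {i. i < k \<and> Q (ps ! i)}"
        "snd (ps ! i) = snd (ps ! i')"
      have "ps ! i = ps ! i'"
        using Qg[OF good_mem[OF good] ] a k by (metis (no_types, lifting) mem_Collect_eq order.strict_trans)
      then show "i = i'" using good_eq[OF good] a k by auto
    qed
    show "(\<lambda>i. snd (ps ! i)) ` {i. i < k \<and> Q (ps ! i)} = {1..<c}"
    proof (intro set_eqI iffI)
      fix x assume "x \<in> (\<lambda>i. snd (ps ! i)) ` {i. i < k \<and> Q (ps ! i)}"
      then obtain i where i: "i < k" "Q (ps ! i)" "x = snd (ps ! i)" by auto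
      have pi: "ps ! i \<in> S_beta \<beta>" using good_mem[OF good] i k by simp
      have xb: "1 \<le> x" "x \<le> d" using S_cases[OF pi] i by auto
      have gi: "ps ! i = g x" using Qg[OF pi i(2)] i by simp
      have "x < c"
      proof (rule ccontr)
        assume "\<not> x < c"
        then have "pt_le (ps ! k) (ps ! i)" using gle[of c x] gk gi cb xb by simp
        then show False using good i k unfolding goodl_def by blast
      qed
      then show "x \<in> {1..<c}" using xb by simp
    next
      fix x assume x: "x \<in> {1..<c}"
      then have xb: "1 \<le> x" "x \<le> d" using cb by auto
      obtain i where i: "i < length ps" "ps ! i = g x" using good_ex[OF good] gS[OF xb] by blast
      have "pt_le (ps ! i) (ps ! k)" using gle[of x c] i gk x cb by simp
      then have "i \<le> k" using good_idx_le[OF good i(1) k] by simp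
      moreover have "i \<noteq> k" using i gk gS[OF xb] gS[OF cb] x by auto
      ultimately show "x \<in> (\<lambda>i. snd (ps ! i)) ` {i. i < k \<and> Q (ps ! i)}"
        using i gS[OF xb] by (intro image_eqI[of _ _ i]) auto
    qed
  qed
  then show ?thesis using bij_betw_same_card c_def by fastforce
qed

lemma top_le: "1 \<le> c \<Longrightarrow> c \<le> c' \<Longrightarrow> c' \<le> d \<Longrightarrow> pt_le (topp \<beta> c) (topp \<beta> c')"
  using blk_mono by (simp add: pt_le_def)
lemma bot_le: "1 \<le> c \<Longrightarrow> c \<le> c' \<Longrightarrow> c' \<le> d \<Longrightarrow> pt_le (botp \<beta> c) (botp \<beta> c')"
  using blk_mono by (simp add: pt_le_def)

lemma count_top: "goodl \<beta> ps \<Longrightarrow> k < length ps \<Longrightarrow> isT \<beta> (ps ! k) \<Longrightarrow>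
   card {i. i < k \<and> isT \<beta> (ps ! i)} = snd (ps ! k) - 1"
  by (rule chain_count[where g = "topp \<beta>"]) (auto simp: S_isT topp_S top_le)

lemma count_bot: "goodl \<beta> ps \<Longrightarrow> k < length ps \<Longrightarrow> \<not> isT \<beta> (ps ! k) \<Longrightarrow>
   card {i. i < k \<and> \<not> isT \<beta> (ps ! i)} = snd (ps ! k) - 1"
  by (rule chain_count[where g = "botp \<beta>" and Q = "\<lambda>p. \<not> isT \<beta> p"]) (auto simp: S_notT botp_S bot_le)

lemma comparable_idx:
  assumes good: "goodl \<beta> ps" and k: "k < length ps"
    and cmpa: "\<And>y. y \<in> S_beta \<beta> \<Longrightarrow> pt_le y (ps ! k) \<or> pt_le (ps ! k) y"
  shows "k = card {y \<in> S_beta \<beta>. pt_le y (ps ! k) \<and> y \<noteq> ps ! k}"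
proof -
  have "{y \<in> S_beta \<beta>. pt_le y (ps ! k) \<and> y \<noteq> ps ! k} = (!) ps ` {..<k}"
  proof (intro set_eqI iffI)
    fix y assume y: "y \<in> {y \<in> S_beta \<beta>. pt_le y (ps ! k) \<and> y \<noteq> ps ! k}"
    then obtain j where j: "j < length ps" "ps ! j = y" using good_ex[OF good] by blast
    have "j \<le> k" using good_idx_le[OF good j(1) k] j y by simp
    moreover have "j \<noteq> k" using j y by auto
    ultimately show "y \<in> (!) ps ` {..<k}" using j by auto
  next
    fix y assume "y \<in> (!) ps ` {..<k}"
    then obtain i where i: "i < k" "y = ps ! i" by auto
    have yS: "y \<in> S_beta \<beta>" using good_mem[OF good] i k by simp
    have "\<not> pt_le (ps ! k) (ps ! i)" using good i k unfolding goodl_def by blast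
    moreover have "y \<noteq> ps ! k" using good_eq[OF good, of i k] i k by auto
    ultimately show "y \<in> {y \<in> S_beta \<beta>. pt_le y (ps ! k) \<and> y \<noteq> ps ! k}" using cmpa[OF yS] i yS by auto
  qed
  moreover have "card ((!) ps ` {..<k}) = k"
    using good k unfolding goodl_def by (subst card_image) (auto intro!: inj_on_nth)
  ultimately show ?thesis by simp
qed

end

context cmp begin

lemma rr_pos: "1 \<le> l \<Longrightarrow> l \<le> length \<beta> \<Longrightarrow> 1 \<le> rr \<beta> l"
  using rr_strict[of 0 l] by simp

lemma blk_rr: "1 \<le> l \<Longrightarrow> l \<le> length \<beta> \<Longrightarrow> blk \<beta> (rr \<beta> l) = l"
  using rr_strict[of "l - 1" l] by (intro blk_unique) auto

lemma blk_rr1: "l < length \<beta> \<Longrightarrow> blk \<beta> (Suc (rr \<beta> l)) = Suc l"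
  using rr_strict[of l "Suc l"] by (intro blk_unique) auto

lemma S_snd: "y \<in> S_beta \<beta> \<Longrightarrow> 1 \<le> snd y \<and> snd y \<le> d \<and> blk \<beta> (snd y) \<le> fst y \<and> fst y \<le> Suc (blk \<beta> (snd y))"
  using S_cases[of y] by (metis botp_simps(1) le_Suc_eq order_refl topp_simps(1))

lemma idx_bot:
  assumes good: "goodl \<beta> ps" and l: "1 \<le> l" "l \<le> length \<beta>"
  shows "ps ! (2 * rr \<beta> l - 1) = botp \<beta> (rr \<beta> l)"
proof -
  define x where "x = botp \<beta> (rr \<beta> l)"
  have rb: "1 \<le> rr \<beta> l" "rr \<beta> l \<le> d" using rr_pos[OF l] rr_le_d by auto
  have bx: "blk \<beta> (rr \<beta> l) = l" using blk_rr[OF l] .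
  obtain k where k: "k < length ps" "ps ! k = x" using good_ex[OF good botp_S[OF rb]] x_def by blast
  have le_iff: "y \<in> S_beta \<beta> \<Longrightarrow> pt_le y x \<longleftrightarrow> snd y \<le> rr \<beta> l" for y
  proof
    assume "y \<in> S_beta \<beta>" "pt_le y x" then show "snd y \<le> rr \<beta> l" by (simp add: pt_le_def x_def)
  next
    assume y: "y \<in> S_beta \<beta>" "snd y \<le> rr \<beta> l"
    have "blk \<beta> (snd y) \<le> l" using blk_le_iff[of "snd y" l] S_snd[OF y(1)] y(2) by simp
    then show "pt_le y x" using S_snd[OF y(1)] y(2) bx by (simp add: pt_le_def x_def)
  qed
  have "k = card {y \<in> S_beta \<beta>. pt_le y (ps ! k) \<and> y \<noteq> ps ! k}"
  proof (rule comparable_idx[OF good k(1)])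
    fix y assume y: "y \<in> S_beta \<beta>"
    show "pt_le y (ps ! k) \<or> pt_le (ps ! k) y"
    proof (cases "snd y \<le> rr \<beta> l")
      case True then show ?thesis using le_iff[OF y] k by simp
    next
      case False
      then have "\<not> blk \<beta> (snd y) \<le> l" using blk_le_iff[of "snd y" l] S_snd[OF y] by simp
      then show ?thesis using S_snd[OF y] False k bx by (simp add: pt_le_def x_def)
    qed
  qed
  also have "{y \<in> S_beta \<beta>. pt_le y (ps ! k) \<and> y \<noteq> ps ! k} = {y \<in> S_beta \<beta>. snd y \<le> rr \<beta> l} - {x}"
    using le_iff k by auto
  also have "card \<dots> = 2 * rr \<beta> l - 1"
    using card_S_le[OF rb(2)] botp_S[OF rb] x_def by (subst card_Diff_singleton) (auto simp: card_ge_0_finite)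
  finally show ?thesis using k x_def by simp
qed

lemma idx_top:
  assumes good: "goodl \<beta> ps" and l: "l < length \<beta>"
  shows "ps ! (2 * rr \<beta> l) = topp \<beta> (Suc (rr \<beta> l))"
proof -
  define x where "x = topp \<beta> (Suc (rr \<beta> l))"
  have rb: "1 \<le> Suc (rr \<beta> l)" "Suc (rr \<beta> l) \<le> d" using rr_strict[of l "Suc l"] l rr_le_d[of "Suc l"] by auto
  have bx: "blk \<beta> (Suc (rr \<beta> l)) = Suc l" using blk_rr1[OF l] .
  obtain k where k: "k < length ps" "ps ! k = x" using good_ex[OF good topp_S[OF rb]] x_def by blast
  have le_iff: "y \<in> S_beta \<beta> \<Longrightarrow> pt_le y x \<and> y \<noteq> x \<longleftrightarrow> snd y \<le> rr \<beta> l" for y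
  proof
    assume y: "y \<in> S_beta \<beta>" and h: "pt_le y x \<and> y \<noteq> x"
    then have s: "snd y \<le> Suc (rr \<beta> l)" by (simp add: pt_le_def x_def)
    show "snd y \<le> rr \<beta> l"
    proof (rule ccontr)
      assume "\<not> snd y \<le> rr \<beta> l"
      then have e: "snd y = Suc (rr \<beta> l)" using s by simp
      then consider "y = topp \<beta> (Suc (rr \<beta> l))" | "y = botp \<beta> (Suc (rr \<beta> l))" using S_cases[OF y] by auto
      then show False using h bx by cases (auto simp: x_def pt_le_def)
    qed
  next
    assume y: "y \<in> S_beta \<beta>" "snd y \<le> rr \<beta> l"
    have "blk \<beta> (snd y) \<le> l" using blk_le_iff[of "snd y" l] S_snd[OF y(1)] y(2) by simp
    then show "pt_le y x \<and> y \<noteq> x" using S_snd[OF y(1)] y(2) bx by (auto simp: pt_le_def x_def)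
  qed
  have "k = card {y \<in> S_beta \<beta>. pt_le y (ps ! k) \<and> y \<noteq> ps ! k}"
  proof (rule comparable_idx[OF good k(1)])
    fix y assume y: "y \<in> S_beta \<beta>"
    show "pt_le y (ps ! k) \<or> pt_le (ps ! k) y"
    proof (cases "snd y \<le> rr \<beta> l")
      case True then show ?thesis using le_iff[OF y] k by simp
    next
      case False
      then have "\<not> blk \<beta> (snd y) \<le> l" using blk_le_iff[of "snd y" l] S_snd[OF y] by simp
      then show ?thesis using S_snd[OF y] False k bx by (simp add: pt_le_def x_def)
    qed
  qed
  also have "{y \<in> S_beta \<beta>. pt_le y (ps ! k) \<and> y \<noteq> ps ! k} = {y \<in> S_beta \<beta>. snd y \<le> rr \<beta> l}"
    using le_iff k by auto
  also have "card \<dots> = 2 * rr \<beta> l"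
    using card_S_le[of "rr \<beta> l"] rr_le_d by simp
  finally show ?thesis using k x_def by simp
qed

end


definition cu :: "bool list \<Rightarrow> nat \<Rightarrow> nat" where "cu D k = length (filter id (take k D))"
definition cd :: "bool list \<Rightarrow> nat \<Rightarrow> nat" where "cd D k = length (filter Not (take k D))"

lemma cu_Suc: "k < length D \<Longrightarrow> cu D (Suc k) = cu D k + (if D ! k then 1 else 0)"
  by (simp add: cu_def take_Suc_conv_app_nth)
lemma cd_Suc: "k < length D \<Longrightarrow> cd D (Suc k) = cd D k + (if D ! k then 0 else 1)"
  by (simp add: cd_def take_Suc_conv_app_nth)
lemma cu_0[simp]: "cu D 0 = 0" by (simp add: cu_def)
lemma cd_0[simp]: "cd D 0 = 0" by (simp add: cd_def)

lemma take_mono_split: "k \<le> k' \<Longrightarrow> take k' D = take k D @ take (k' - k) (drop k D)"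
  by (metis le_add_diff_inverse take_add)

lemma cu_mono: "k \<le> k' \<Longrightarrow> cu D k \<le> cu D k'"
  by (simp add: cu_def take_mono_split)
lemma cd_mono: "k \<le> k' \<Longrightarrow> cd D k \<le> cd D k'"
  by (simp add: cd_def take_mono_split)

lemma cu_cd: "k \<le> length D \<Longrightarrow> cu D k + cd D k = k"
  using sum_length_filter_compl[of id "take k D"] by (simp add: cu_def cd_def comp_def)

lemma height_cu: "height D k = int (cu D k) - int (cd D k)"
  by (simp add: height_def cu_def cd_def)

lemma cd_ex: "t < cd D k \<Longrightarrow> \<exists>i<k. i < length D \<and> \<not> D ! i \<and> cd D i = t"
proof (induction k)
  case 0 then show ?case by simp
next
  case (Suc k)
  show ?case
  proof (cases "k < length D")
    case True
    show ?thesis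
    proof (cases "t < cd D k")
      case True then show ?thesis using Suc.IH by (meson less_SucI)
    next
      case False
      then have "t = cd D k" "\<not> D ! k" using Suc.prems cd_Suc[OF True] by (auto split: if_splits)
      then show ?thesis using True by auto
    qed
  next
    case False
    then have "cd D (Suc k) = cd D k" by (simp add: cd_def)
    then show ?thesis using Suc by (metis less_SucI)
  qed
qed

lemma cu_map: "k \<le> length ps \<Longrightarrow> cu (map f ps) k = card {i. i < k \<and> f (ps ! i)}"
  unfolding cu_def by (subst length_filter_conv_card) (auto intro: arg_cong[where f = card])
lemma cd_map: "k \<le> length ps \<Longrightarrow> cd (map f ps) k = card {i. i < k \<and> \<not> f (ps ! i)}"
  unfolding cd_def by (subst length_filter_conv_card) (auto intro: arg_cong[where f = card])

definition ptsD :: "nat list \<Rightarrow> bool list \<Rightarrow> (nat \<times> nat) list" where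
  "ptsD \<beta> D = map (\<lambda>k. if D ! k then topp \<beta> (Suc (cu D k)) else botp \<beta> (Suc (cd D k))) [0..<length D]"

context cmp begin

lemma good_top: assumes g: "goodl \<beta> ps" and k: "k < length ps" and t: "isT \<beta> (ps ! k)"
  shows "ps ! k = topp \<beta> (Suc (cu (map (isT \<beta>) ps) k))"
proof -
  have "cu (map (isT \<beta>) ps) k = snd (ps ! k) - 1" using cu_map[of k ps] k count_top[OF g k t] by simp
  moreover have "1 \<le> snd (ps ! k)" using S_snd good_mem[OF g k] by simp
  ultimately show ?thesis using S_isT[OF good_mem[OF g k] t] by simp
qed

lemma good_bot: assumes g: "goodl \<beta> ps" and k: "k < length ps" and t: "\<not> isT \<beta> (ps ! k)"
  shows "ps ! k = botp \<beta> (Suc (cd (map (isT \<beta>) ps) k))"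
proof -
  have "cd (map (isT \<beta>) ps) k = snd (ps ! k) - 1" using cd_map[of k ps] k count_bot[OF g k t] by simp
  moreover have "1 \<le> snd (ps ! k)" using S_snd good_mem[OF g k] by simp
  ultimately show ?thesis using S_notT[OF good_mem[OF g k] t] by simp
qed

lemma good_ptsD: "goodl \<beta> ps \<Longrightarrow> ptsD \<beta> (map (isT \<beta>) ps) = ps"
  unfolding ptsD_def
  by (rule nth_equalityI) (auto simp: good_top[symmetric] good_bot[symmetric])

lemma good_cd_le: assumes g: "goodl \<beta> ps" and k: "k \<le> length ps"
  shows "cd (map (isT \<beta>) ps) k \<le> cu (map (isT \<beta>) ps) k"
proof (cases "cd (map (isT \<beta>) ps) k")
  case 0 then show ?thesis by simp
next
  case (Suc t)
  define D where "D = map (isT \<beta>) ps"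
  obtain i where i: "i < k" "i < length D" "\<not> D ! i" "cd D i = t"
    using cd_ex[of t D k] Suc D_def by auto
  have il: "i < length ps" using i D_def by simp
  have pi: "ps ! i = botp \<beta> (Suc t)" using good_bot[OF g il] i D_def by simp
  have tb: "1 \<le> Suc t" "Suc t \<le> d" using S_snd[OF good_mem[OF g il]] pi by auto
  obtain i' where i': "i' < length ps" "ps ! i' = topp \<beta> (Suc t)" using good_ex[OF g topp_S[OF tb]] by blast
  have "pt_le (ps ! i') (ps ! i)" using i' pi by (simp add: pt_le_def)
  then have "i' \<le> i" using good_idx_le[OF g i'(1) il] by simp
  moreover have "i' \<noteq> i" using i' pi by auto
  ultimately have "i' < i" by simp
  have "cu D i' = t" using good_top[OF g i'(1)] i' D_def by simp
  moreover have "cu D (Suc i') = cu D i' + 1" using cu_Suc[of i' D] i' D_def by simp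
  moreover have "cu D (Suc i') \<le> cu D k" using \<open>i' < i\<close> i by (intro cu_mono) simp
  ultimately show ?thesis using Suc D_def by simp
qed

lemma good_in_E:
  assumes g: "goodl \<beta> ps"
  shows "map (isT \<beta>) ps \<in> E_set d (map (rr \<beta>) [1..<length \<beta>])"
proof -
  define D where "D = map (isT \<beta>) ps"
  have len: "length D = 2 * d" using good_len[OF g] D_def by simp
  have dpos: "1 \<le> d" using d_pos by simp
  have ret: "cd D (2 * rr \<beta> l) = rr \<beta> l \<and> cu D (2 * rr \<beta> l) = rr \<beta> l \<and> \<not> D ! (2 * rr \<beta> l - 1)"
    if l: "1 \<le> l" "l \<le> length \<beta>" for l
  proof -
    have rb: "1 \<le> rr \<beta> l" "rr \<beta> l \<le> d" using rr_pos[OF l] rr_le_d by auto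
    have kl: "2 * rr \<beta> l - 1 < length ps" using rb good_len[OF g] by simp
    have pk: "ps ! (2 * rr \<beta> l - 1) = botp \<beta> (rr \<beta> l)" using idx_bot[OF g l] .
    have nt: "\<not> D ! (2 * rr \<beta> l - 1)" using pk kl D_def by simp
    have "cd D (2 * rr \<beta> l - 1) = rr \<beta> l - 1" using good_bot[OF g kl] pk D_def by simp
    moreover have "cd D (Suc (2 * rr \<beta> l - 1)) = cd D (2 * rr \<beta> l - 1) + 1"
      using cd_Suc[of "2 * rr \<beta> l - 1" D] kl nt D_def by simp
    moreover have "Suc (2 * rr \<beta> l - 1) = 2 * rr \<beta> l" using rb by simp
    ultimately have c1: "cd D (2 * rr \<beta> l) = rr \<beta> l" using rb by simp
    have "cu D (2 * rr \<beta> l) + cd D (2 * rr \<beta> l) = 2 * rr \<beta> l" using cu_cd[of "2 * rr \<beta> l" D] rb len by simp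
    then show ?thesis using c1 nt by simp
  qed
  have dy: "dyck d D"
    unfolding dyck_def
  proof (intro conjI allI impI)
    show "length D = 2 * d" by (rule len)
    fix k assume "k \<le> length D"
    then show "0 \<le> height D k" using good_cd_le[OF g, of k] D_def by (simp add: height_cu)
  next
    have "cu D (length D) = d \<and> cd D (length D) = d" using ret[of "length \<beta>"] len_pos rr_len len by simp
    then show "height D (length D) = 0" by (simp add: height_cu)
  qed
  have "is_return D (2 * rr \<beta> l)" if l: "1 \<le> l" "l < length \<beta>" for l
  proof -
    have rb: "1 \<le> rr \<beta> l" "rr \<beta> l < d" using rr_pos[of l] rr_strict[of l "length \<beta>"] rr_len l by auto
    have "ps ! (2 * rr \<beta> l) = topp \<beta> (Suc (rr \<beta> l))" using idx_top[OF g l(2)] .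
    then have "D ! (2 * rr \<beta> l)" using D_def rb good_len[OF g] by simp
    then show ?thesis using ret[of l] l rb len unfolding is_return_def valley_def
      by (simp add: height_cu)
  qed
  then show ?thesis using dy D_def unfolding E_set_def by auto
qed

end

context cmp begin

lemma typ_ptsD: "map (isT \<beta>) (ptsD \<beta> D) = D"
  unfolding ptsD_def by (rule nth_equalityI) auto

lemma E_facts:
  assumes E: "D \<in> E_set d (map (rr \<beta>) [1..<length \<beta>])"
  shows "length D = 2 * d" "\<And>k. k \<le> length D \<Longrightarrow> cd D k \<le> cu D k"
    "cu D (length D) = d" "cd D (length D) = d"
    "\<And>l. 1 \<le> l \<Longrightarrow> l < length \<beta> \<Longrightarrow> cu D (2 * rr \<beta> l) = rr \<beta> l \<and> cd D (2 * rr \<beta> l) = rr \<beta> l"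
proof -
  have dy: "dyck d D" and rt: "\<And>l. 1 \<le> l \<Longrightarrow> l < length \<beta> \<Longrightarrow> is_return D (2 * rr \<beta> l)"
    using E unfolding E_set_def by auto
  show len: "length D = 2 * d" using dy by (simp add: dyck_def)
  show "\<And>k. k \<le> length D \<Longrightarrow> cd D k \<le> cu D k" using dy by (auto simp: dyck_def height_cu)
  have "height D (length D) = 0" using dy unfolding dyck_def by blast
  then have "cu D (length D) = cd D (length D)" by (simp add: height_cu)
  then show "cu D (length D) = d" "cd D (length D) = d" using cu_cd[of "length D" D] len by simp_all
  fix l assume l: "1 \<le> l" "l < length \<beta>"
  have r: "is_return D (2 * rr \<beta> l)" using rt[OF l] .
  then have "2 * rr \<beta> l < length D" "cu D (2 * rr \<beta> l) = cd D (2 * rr \<beta> l)"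
    by (auto simp: is_return_def valley_def height_cu)
  then show "cu D (2 * rr \<beta> l) = rr \<beta> l \<and> cd D (2 * rr \<beta> l) = rr \<beta> l"
    using cu_cd[of "2 * rr \<beta> l" D] by simp
qed

lemma ptsD_good:
  assumes E: "D \<in> E_set d (map (rr \<beta>) [1..<length \<beta>])"
  shows "goodl \<beta> (ptsD \<beta> D)"
proof -
  note f = E_facts[OF E]
  define P where "P = ptsD \<beta> D"
  have lenP: "length P = length D" by (simp add: P_def ptsD_def)
  have Pk: "k < length D \<Longrightarrow> P ! k = (if D ! k then topp \<beta> (Suc (cu D k)) else botp \<beta> (Suc (cd D k)))" for k
    by (simp add: P_def ptsD_def)
  have ub: "k < length D \<Longrightarrow> D ! k \<Longrightarrow> Suc (cu D k) \<le> d" for k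
    using cu_Suc[of k D] cu_mono[of "Suc k" "length D" D] f(3) by simp
  have db: "k < length D \<Longrightarrow> \<not> D ! k \<Longrightarrow> Suc (cd D k) \<le> d" for k
    using cd_Suc[of k D] cd_mono[of "Suc k" "length D" D] f(4) by simp
  have sub: "set P \<subseteq> S_beta \<beta>"
  proof
    fix x assume "x \<in> set P"
    then obtain k where k: "k < length D" "x = P ! k" using lenP by (auto simp: in_set_conv_nth)
    then show "x \<in> S_beta \<beta>" using Pk[OF k(1)] ub[OF k(1)] db[OF k(1)] topp_S botp_S by auto
  qed
  have cu_lt: "i < j \<Longrightarrow> j \<le> length D \<Longrightarrow> D ! i \<Longrightarrow> cu D i < cu D j" for i j
    using cu_Suc[of i D] cu_mono[of "Suc i" j D] by simp
  have cd_lt: "i < j \<Longrightarrow> j \<le> length D \<Longrightarrow> \<not> D ! i \<Longrightarrow> cd D i < cd D j" for i j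
    using cd_Suc[of i D] cd_mono[of "Suc i" j D] by simp
  have dist: "distinct P"
    unfolding distinct_conv_nth
  proof (intro allI impI)
    fix i j assume a: "i < length P" "j < length P" "i \<noteq> j"
    show "P ! i \<noteq> P ! j"
    proof
      assume e: "P ! i = P ! j"
      have same: "D ! i = D ! j" using e Pk[of i] Pk[of j] a lenP by (auto split: if_splits)
      have "i < j \<or> j < i" using a by auto
      then show False
      proof
        assume ij: "i < j"
        show False using e Pk[of i] Pk[of j] a lenP same cu_lt[OF ij, of] cd_lt[OF ij] by (auto split: if_splits)
      next
        assume ij: "j < i"
        show False using e Pk[of i] Pk[of j] a lenP same cu_lt[OF ij] cd_lt[OF ij] by (auto split: if_splits)
      qed
    qed
  qed
  have setP: "set P = S_beta \<beta>"
  proof (rule card_subset_eq)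
    show "finite (S_beta \<beta>)" using card_S d_pos by (intro card_ge_0_finite) simp
    show "set P \<subseteq> S_beta \<beta>" by (rule sub)
    show "card (set P) = card (S_beta \<beta>)" using distinct_card[OF dist] lenP f(1) card_S by simp
  qed
  have srt: "\<not> pt_le (P ! j) (P ! i)" if ij: "i < j" "j < length P" for i j
  proof
    assume le: "pt_le (P ! j) (P ! i)"
    have il: "i < length D" "j < length D" using ij lenP by auto
    show False
    proof (cases "D ! i")
      case Di: True
      show False
      proof (cases "D ! j")
        case True
        then show False using le Pk[OF il(1)] Pk[OF il(2)] Di cu_lt[OF ij(1), of] il by (auto simp: pt_le_def)
      next
        case Dj: False
        define ci where "ci = Suc (cu D i)"
        define cj where "cj = Suc (cd D j)"
        have cib: "1 \<le> ci" "ci \<le> d" using ub[OF il(1) Di] ci_def by auto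
        have cjb: "1 \<le> cj" "cj \<le> d" using db[OF il(2) Dj] cj_def by auto
        have lt: "Suc (blk \<beta> cj) \<le> blk \<beta> ci" using le Pk[OF il(1)] Pk[OF il(2)] Di Dj ci_def cj_def
          by (simp add: pt_le_def)
        define l where "l = blk \<beta> cj"
        have l1: "1 \<le> l" using blk_ge[OF cjb] l_def by simp
        have l2: "l < length \<beta>" using blk_le[OF cib] lt l_def by simp
        have c1: "cj \<le> rr \<beta> l" using blk_hi[OF cjb] l_def by simp
        have c2: "\<not> ci \<le> rr \<beta> l" using blk_le_iff[OF cib, of l] lt l_def by simp
        have R: "cu D (2 * rr \<beta> l) = rr \<beta> l" "cd D (2 * rr \<beta> l) = rr \<beta> l" using f(5)[OF l1 l2] by auto
        have "2 * rr \<beta> l \<le> i"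
        proof (rule ccontr)
          assume "\<not> 2 * rr \<beta> l \<le> i"
          then have "cu D i < cu D (2 * rr \<beta> l)" using cu_lt[of i "2 * rr \<beta> l"] Di
              rr_strict[of l "length \<beta>"] rr_len l2 f(1) by simp
          then show False using R c2 ci_def by simp
        qed
        then have "cd D (2 * rr \<beta> l) \<le> cd D j" using ij by (intro cd_mono) simp
        then show False using R c1 cj_def by simp
      qed
    next
      case Di: False
      show False
      proof (cases "D ! j")
        case Dj: True
        have "cd D (Suc i) \<le> cu D (Suc i)" using f(2)[of "Suc i"] il by simp
        moreover have "cd D (Suc i) = Suc (cd D i)" using cd_Suc[OF il(1)] Di by simp
        moreover have "cu D (Suc i) \<le> cu D j" using ij by (intro cu_mono) simp
        ultimately show False using le Pk[OF il(1)] Pk[OF il(2)] Di Dj by (simp add: pt_le_def)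
      next
        case False
        then show False using le Pk[OF il(1)] Pk[OF il(2)] Di cd_lt[OF ij(1)] il by (auto simp: pt_le_def)
      qed
    qed
  qed
  show ?thesis using dist setP srt unfolding goodl_def P_def by blast
qed

end

context cmp begin

lemma sumb: "sum_list \<beta> = d" using comp by (simp add: composition_def)

lemma bij_Suc: "bij_betw Suc {..<n} {1..n}"
proof -
  have "Suc ` {..<n} = {1..n}"
    by (metis atLeastLessThanSuc_atLeastAtMost image_Suc_atLeastLessThan lessThan_atLeast0 One_nat_def)
  then show ?thesis unfolding bij_betw_def by simp
qed

lemma lin_ext_eq: "lin_ext \<beta> = map (nu \<beta>) ` {ps. goodl \<beta> ps}"
proof (intro set_eqI iffI)
  fix w assume "w \<in> lin_ext \<beta>"
  then obtain \<sigma> where w: "w = map (\<lambda>k. nu \<beta> (inv_into (S_beta \<beta>) \<sigma> k)) [1..<2 * d + 1]"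
    and bij: "bij_betw \<sigma> (S_beta \<beta>) {1..2 * d}"
    and ord: "\<forall>x\<in>S_beta \<beta>. \<forall>y\<in>S_beta \<beta>. pt_le x y \<longrightarrow> \<sigma> x \<le> \<sigma> y"
    unfolding lin_ext_def sumb by blast
  define ps where "ps = map (inv_into (S_beta \<beta>) \<sigma>) [1..<2 * d + 1]"
  have ib: "bij_betw (inv_into (S_beta \<beta>) \<sigma>) {1..2 * d} (S_beta \<beta>)" using bij_betw_inv_into[OF bij] .
  have st: "set [1..<2 * d + 1] = {1..2 * d}" by auto
  have len: "length ps = 2 * d" by (simp add: ps_def)
  have nth: "i < 2 * d \<Longrightarrow> ps ! i = inv_into (S_beta \<beta>) \<sigma> (Suc i)" for i
    by (simp add: ps_def del: upt_Suc)
  have "goodl \<beta> ps" unfolding goodl_def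
  proof (intro conjI allI impI)
    show "distinct ps" unfolding ps_def using ib st
      by (simp add: distinct_map bij_betw_def)
    show "set ps = S_beta \<beta>" unfolding ps_def using ib st by (simp add: bij_betw_def)
    fix i j assume ij: "i < j" "j < length ps"
    show "\<not> pt_le (ps ! j) (ps ! i)"
    proof
      assume le: "pt_le (ps ! j) (ps ! i)"
      have m: "Suc i \<in> {1..2 * d}" "Suc j \<in> {1..2 * d}" using ij len by auto
      have s: "\<sigma> (ps ! i) = Suc i" "\<sigma> (ps ! j) = Suc j"
        using nth[of i] nth[of j] ij len m bij by (auto simp: bij_betw_def f_inv_into_f)
      have "ps ! i \<in> S_beta \<beta>" "ps ! j \<in> S_beta \<beta>" using nth[of i] nth[of j] ij len m ib
        by (auto simp: bij_betw_def)
      then have "\<sigma> (ps ! j) \<le> \<sigma> (ps ! i)" using ord le by blast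
      then show False using s ij by simp
    qed
  qed
  moreover have "w = map (nu \<beta>) ps" unfolding w ps_def by simp
  ultimately show "w \<in> map (nu \<beta>) ` {ps. goodl \<beta> ps}" by blast
next
  fix w assume "w \<in> map (nu \<beta>) ` {ps. goodl \<beta> ps}"
  then obtain ps where w: "w = map (nu \<beta>) ps" and g: "goodl \<beta> ps" by blast
  have len: "length ps = 2 * d" using good_len[OF g] .
  have bn: "bij_betw ((!) ps) {..<2 * d} (S_beta \<beta>)"
    using g len by (intro bij_betw_nth) (auto simp: goodl_def)
  define \<sigma> where "\<sigma> = Suc \<circ> inv_into {..<2 * d} ((!) ps)"
  have bs: "bij_betw \<sigma> (S_beta \<beta>) {1..2 * d}" unfolding \<sigma>_def
    by (rule bij_betw_trans[OF bij_betw_inv_into[OF bn] bij_Suc])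
  have ord: "\<forall>x\<in>S_beta \<beta>. \<forall>y\<in>S_beta \<beta>. pt_le x y \<longrightarrow> \<sigma> x \<le> \<sigma> y"
  proof (intro ballI impI)
    fix x y assume x: "x \<in> S_beta \<beta>" and y: "y \<in> S_beta \<beta>" and le: "pt_le x y"
    define i where "i = inv_into {..<2 * d} ((!) ps) x"
    define j where "j = inv_into {..<2 * d} ((!) ps) y"
    have i: "i < 2 * d" "ps ! i = x" using bn x unfolding i_def bij_betw_def
      by (metis inv_into_into f_inv_into_f lessThan_iff)+
    have j: "j < 2 * d" "ps ! j = y" using bn y unfolding j_def bij_betw_def
      by (metis inv_into_into f_inv_into_f lessThan_iff)+
    have "i \<le> j" using good_idx_le[OF g, of i j] i j le len by simp
    then show "\<sigma> x \<le> \<sigma> y" unfolding \<sigma>_def i_def j_def by simp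
  qed
  have inv: "inv_into (S_beta \<beta>) \<sigma> (Suc k) = ps ! k" if k: "k < 2 * d" for k
  proof -
    have pk: "ps ! k \<in> S_beta \<beta>" using bn k by (auto simp: bij_betw_def)
    have "\<sigma> (ps ! k) = Suc k" unfolding \<sigma>_def using bn k
      by (simp add: bij_betw_def inv_into_f_f)
    then show ?thesis using inv_into_f_f[of \<sigma> "S_beta \<beta>" "ps ! k"] bs pk by (simp add: bij_betw_def)
  qed
  have "w = map (\<lambda>k. nu \<beta> (inv_into (S_beta \<beta>) \<sigma> k)) [1..<2 * d + 1]"
    unfolding w by (rule nth_equalityI) (auto simp: len inv simp del: upt_Suc)
  then show "w \<in> lin_ext \<beta>" unfolding lin_ext_def sumb using bs ord by blast
qed

end

context cmp begin

lemma maj_eq: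
  assumes g: "goodl \<beta> ps"
  shows "maj_word (map (nu \<beta>) ps) = maj_dyck (map (isT \<beta>) ps) - 2 * (\<Sum>i\<in>{1..<length \<beta>}. rr \<beta> i)"
proof -
  define D where "D = map (isT \<beta>) ps"
  have len: "length ps = 2 * d" using good_len[OF g] .
  define R where "R = (\<lambda>i. 2 * rr \<beta> i) ` {1..<length \<beta>}"
  define V where "V = {k. valley D k}"
  have desc: "nu \<beta> (ps ! k) < nu \<beta> (ps ! (k - 1)) \<longleftrightarrow>
      \<not> isT \<beta> (ps ! (k - 1)) \<and> isT \<beta> (ps ! k) \<and> blk \<beta> (snd (ps ! (k - 1))) = blk \<beta> (snd (ps ! k))"
    if k: "1 \<le> k" "k < length ps" for k
  proof -
    have ne: "ps ! (k - 1) \<noteq> ps ! k" using good_eq[OF g, of "k - 1" k] k by (auto; linarith)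
    have nl: "\<not> pt_le (ps ! k) (ps ! (k - 1))" using g k unfolding goodl_def by simp
    show ?thesis using nu_cmp[OF good_mem[OF g] good_mem[OF g] ne nl] k by simp
  qed
  have bnd: "k \<in> R \<longleftrightarrow> blk \<beta> (snd (ps ! (k - 1))) \<noteq> blk \<beta> (snd (ps ! k))"
    if k: "k \<in> V" for k
  proof
    assume "k \<in> R"
    then obtain l where l: "1 \<le> l" "l < length \<beta>" "k = 2 * rr \<beta> l" unfolding R_def by auto
    have "ps ! (k - 1) = botp \<beta> (rr \<beta> l)" using idx_bot[OF g l(1)] l by simp
    moreover have "ps ! k = topp \<beta> (Suc (rr \<beta> l))" using idx_top[OF g l(2)] l by simp
    ultimately show "blk \<beta> (snd (ps ! (k - 1))) \<noteq> blk \<beta> (snd (ps ! k))"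
      using blk_rr[of l] blk_rr1[of l] l by simp
  next
    assume ne: "blk \<beta> (snd (ps ! (k - 1))) \<noteq> blk \<beta> (snd (ps ! k))"
    have kv: "0 < k" "k < length ps" "\<not> isT \<beta> (ps ! (k - 1))" "isT \<beta> (ps ! k)"
      using k unfolding V_def valley_def D_def by auto
    have k1: "k - 1 < length ps" using kv by simp
    define c where "c = snd (ps ! (k - 1))"
    define c' where "c' = snd (ps ! k)"
    have pk1: "ps ! (k - 1) = botp \<beta> c" using S_notT[OF good_mem[OF g k1] kv(3)] c_def by simp
    have pk: "ps ! k = topp \<beta> c'" using S_isT[OF good_mem[OF g kv(2)] kv(4)] c'_def by simp
    have cb: "1 \<le> c" "c \<le> d" "1 \<le> c'" "c' \<le> d" using S_snd[OF good_mem[OF g k1]] S_snd[OF good_mem[OF g kv(2)]]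
      c_def c'_def by auto
    have nl: "\<not> pt_le (ps ! k) (ps ! (k - 1))" using g kv unfolding goodl_def by simp
    have lt: "blk \<beta> c < blk \<beta> c'"
    proof (rule ccontr)
      assume "\<not> blk \<beta> c < blk \<beta> c'"
      then have "blk \<beta> c' < blk \<beta> c" using ne c_def c'_def by simp
      then have "c' < c" using blk_lt[OF cb(3,4,1,2)] by simp
      then have "pt_le (ps ! k) (ps ! (k - 1))" using pk pk1 \<open>blk \<beta> c' < blk \<beta> c\<close> by (simp add: pt_le_def)
      then show False using nl by simp
    qed
    define l where "l = blk \<beta> c"
    have l: "1 \<le> l" "l < length \<beta>" using blk_ge[OF cb(1,2)] blk_le[OF cb(3,4)] lt l_def by auto
    have c1: "c \<le> rr \<beta> l" using blk_hi[OF cb(1,2)] l_def by simp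
    have c2: "rr \<beta> l < c'" using blk_le_iff[OF cb(3,4), of l] lt l_def by simp
    have rb: "1 \<le> rr \<beta> l" "rr \<beta> l < d" using rr_pos[of l] rr_strict[of l "length \<beta>"] rr_len l by auto
    have i1: "2 * rr \<beta> l - 1 < length ps" "2 * rr \<beta> l < length ps" using rb len by auto
    have "pt_le (ps ! (k - 1)) (ps ! (2 * rr \<beta> l - 1))"
      using idx_bot[OF g l(1)] l pk1 bot_le[of c "rr \<beta> l"] cb c1 rb by simp
    then have a1: "k - 1 \<le> 2 * rr \<beta> l - 1" using good_idx_le[OF g k1 i1(1)] by simp
    have "pt_le (ps ! (2 * rr \<beta> l)) (ps ! k)"
      using idx_top[OF g l(2)] pk top_le[of "Suc (rr \<beta> l)" c'] cb c2 by simp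
    then have a2: "2 * rr \<beta> l \<le> k" using good_idx_le[OF g i1(2) kv(2)] by simp
    have "k = 2 * rr \<beta> l" using a1 a2 kv rb by linarith
    then show "k \<in> R" unfolding R_def using l by auto
  qed
  have RV: "R \<subseteq> V"
  proof
    fix k assume "k \<in> R"
    then obtain l where l: "1 \<le> l" "l < length \<beta>" "k = 2 * rr \<beta> l" unfolding R_def by auto
    have "D \<in> E_set d (map (rr \<beta>) [1..<length \<beta>])" using good_in_E[OF g] D_def by simp
    then have "is_return D k" using l unfolding E_set_def by auto
    then show "k \<in> V" unfolding V_def is_return_def by simp
  qed
  have finV: "finite V" unfolding V_def valley_def by (rule finite_subset[of _ "{..<length D}"]) auto
  have DES: "{k. 1 \<le> k \<and> k < length (map (nu \<beta>) ps) \<and> map (nu \<beta>) ps ! k < map (nu \<beta>) ps ! (k - 1)} = V - R"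
  proof (intro set_eqI iffI)
    fix k assume "k \<in> {k. 1 \<le> k \<and> k < length (map (nu \<beta>) ps) \<and> map (nu \<beta>) ps ! k < map (nu \<beta>) ps ! (k - 1)}"
    then have k: "1 \<le> k" "k < length ps" "nu \<beta> (ps ! k) < nu \<beta> (ps ! (k - 1))" by auto
    then have h: "\<not> isT \<beta> (ps ! (k - 1)) \<and> isT \<beta> (ps ! k) \<and> blk \<beta> (snd (ps ! (k - 1))) = blk \<beta> (snd (ps ! k))"
      using desc by blast
    then have "k \<in> V" using k unfolding V_def valley_def D_def by auto
    then show "k \<in> V - R" using bnd h by blast
  next
    fix k assume kk: "k \<in> V - R"
    then have k: "0 < k" "k < length ps" "\<not> isT \<beta> (ps ! (k - 1))" "isT \<beta> (ps ! k)"
      unfolding V_def valley_def D_def by auto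
    have "blk \<beta> (snd (ps ! (k - 1))) = blk \<beta> (snd (ps ! k))" using bnd kk by blast
    then have "nu \<beta> (ps ! k) < nu \<beta> (ps ! (k - 1))" using desc[of k] k by simp
    then show "k \<in> {k. 1 \<le> k \<and> k < length (map (nu \<beta>) ps) \<and> map (nu \<beta>) ps ! k < map (nu \<beta>) ps ! (k - 1)}"
      using k by simp
  qed
  have "maj_word (map (nu \<beta>) ps) = \<Sum>(V - R)" unfolding maj_word_def DES[symmetric] by simp
  also have "\<dots> = \<Sum>V - \<Sum>R" using finV RV finite_subset by (intro sum_diff_nat) auto
  also have "\<Sum>R = (\<Sum>i\<in>{1..<length \<beta>}. 2 * rr \<beta> i)" unfolding R_def
  proof (rule sum.reindex_cong[where l = "\<lambda>i. 2 * rr \<beta> i"])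
    show "inj_on (\<lambda>i. 2 * rr \<beta> i) {1..<length \<beta>}"
    proof (rule inj_onI)
      fix x y assume a: "x \<in> {1..<length \<beta>}" "y \<in> {1..<length \<beta>}" "2 * rr \<beta> x = 2 * rr \<beta> y"
      show "x = y"
      proof (rule ccontr)
        assume "x \<noteq> y"
        then consider "x < y" | "y < x" by linarith
        then show False using rr_strict[of x y] rr_strict[of y x] a by cases auto
      qed
    qed
  qed auto
  also have "\<dots> = 2 * (\<Sum>i\<in>{1..<length \<beta>}. rr \<beta> i)" by (simp add: sum_distrib_left)
  finally show ?thesis unfolding V_def D_def maj_dyck_def by simp
qed

end


theorem proposition3p8:
  fixes \<beta> :: "nat list" and d :: nat and q :: "'a :: comm_ring_1"
  assumes "composition \<beta> d"
  shows "(\<Sum>w\<in>lin_ext \<beta>. q ^ maj_word w) =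
         (\<Sum>D\<in>E_set d (map (rr \<beta>) [1..<length \<beta>]).
             q ^ (maj_dyck D - 2 * (\<Sum>i\<in>{1..<length \<beta>}. rr \<beta> i)))"
proof -
  interpret cmp \<beta> d by (rule cmp.intro) (rule assms)
  define E where "E = E_set d (map (rr \<beta>) [1..<length \<beta>])"
  have G: "{ps. goodl \<beta> ps} = ptsD \<beta> ` E"
  proof (intro set_eqI iffI)
    fix ps assume "ps \<in> {ps. goodl \<beta> ps}"
    then have g: "goodl \<beta> ps" by simp
    show "ps \<in> ptsD \<beta> ` E" using good_ptsD[OF g] good_in_E[OF g] E_def by (metis imageI)
  next
    fix ps assume "ps \<in> ptsD \<beta> ` E"
    then show "ps \<in> {ps. goodl \<beta> ps}" using ptsD_good E_def by auto
  qed
  have inj: "inj_on (map (nu \<beta>) \<circ> ptsD \<beta>) E"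
  proof (rule inj_onI)
    fix D D' assume a: "D \<in> E" "D' \<in> E" "(map (nu \<beta>) \<circ> ptsD \<beta>) D = (map (nu \<beta>) \<circ> ptsD \<beta>) D'"
    have g: "goodl \<beta> (ptsD \<beta> D)" "goodl \<beta> (ptsD \<beta> D')" using ptsD_good a E_def by auto
    have "ptsD \<beta> D = ptsD \<beta> D'"
    proof (rule map_inj_on)
      show "map (nu \<beta>) (ptsD \<beta> D) = map (nu \<beta>) (ptsD \<beta> D')" using a by simp
      show "inj_on (nu \<beta>) (set (ptsD \<beta> D) \<union> set (ptsD \<beta> D'))"
        using g nu_inj unfolding goodl_def by simp
    qed
    then show "D = D'" using typ_ptsD[of D] typ_ptsD[of D'] by metis
  qed
  have "(\<Sum>w\<in>lin_ext \<beta>. q ^ maj_word w) = (\<Sum>w\<in>(map (nu \<beta>) \<circ> ptsD \<beta>) ` E. q ^ maj_word w)"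
    unfolding lin_ext_eq G image_comp by simp
  also have "\<dots> = (\<Sum>D\<in>E. q ^ maj_word (map (nu \<beta>) (ptsD \<beta> D)))"
    by (subst sum.reindex[OF inj]) simp
  also have "\<dots> = (\<Sum>D\<in>E. q ^ (maj_dyck D - 2 * (\<Sum>i\<in>{1..<length \<beta>}. rr \<beta> i)))"
  proof (rule sum.cong[OF refl])
    fix D assume "D \<in> E"
    then have g: "goodl \<beta> (ptsD \<beta> D)" using ptsD_good E_def by auto
    show "q ^ maj_word (map (nu \<beta>) (ptsD \<beta> D)) = q ^ (maj_dyck D - 2 * (\<Sum>i\<in>{1..<length \<beta>}. rr \<beta> i))"
      using maj_eq[OF g] typ_ptsD[of D] by simp
  qed
  finally show ?thesis unfolding E_def .
qed


end
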